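(* Let $R$ be a Hecke symmetry with parameter $q$ on a finite dimensional vector space $V$, let $\mathbb T=\mathbb T(V)$ be the tensor algebra and $I$ its ideal generated by $\operatorname{Ker}(R-q\,\mathrm{id})\subset V^{\otimes2}$ (so $\Lambda(V,R)=\mathbb T/I$). Fix $n>1$ and put $L_k=\{a\in\mathbb T_k: a\,\mathbb T_{n-k}\subset I_n\}$ for $0\le k<n$, and $$y_k=\sum_{j=0}^{k-1}(-1)^{j}q^{\,k-1-j}\,T_1T_2\cdots T_j\in\mathcal H_k\quad(k>0),$$ (the $j=0$ term being $q^{k-1}$), acting on $\mathbb T_k=V^{\otimes k}$ via $R$. Then for $0<k<n$ one has $y_kL_k\subset V\otimes L_{k-1}$.
   Context: A Hecke symmetry with parameter $0\neq q\in\Bbbk$ on $V$ is a linear operator $R$ on $V\otimes V$ with $(R+\mathrm{id})(R-q\,\mathrm{id})=0$ and $(R\otimes\mathrm{id})(\mathrm{id}\otimes R)(R\otimes\mathrm{id})=(\mathrm{id}\otimes R)(R\otimes\mathrm{id})(\mathrm{id}\otimes R)$. The Hecke algebra $\mathcal H_k(q)$ acts on $V^{\otimes k}$ with $T_i$ acting by $\mathrm{id}^{\otimes(i-1)}\otimes R\otimes\mathrm{id}^{\otimes(k-i-1)}$. Subscripts denote homogeneous components; $\mathbb T_0=\Bbbk$. *)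

theory Defs
  imports Main
begin

text \<open>Coordinates: V = k^d with basis e_0,...,e_(d-1).  A tensor in the tensor
algebra T(V) is a finitely supported function on words (lists) over {..<d};
the value at the word [i1,...,im] is the coefficient of e_i1 (x) ... (x) e_im.\<close>

definition Tall :: "nat \<Rightarrow> (nat list \<Rightarrow> 'a::field) set" where
  "Tall d = {f. finite {w. f w \<noteq> 0} \<and> (\<forall>w. f w \<noteq> 0 \<longrightarrow> set w \<subseteq> {..<d})}"

definition Tk :: "nat \<Rightarrow> nat \<Rightarrow> (nat list \<Rightarrow> 'a::field) set" where
  "Tk d k = {f \<in> Tall d. \<forall>w. f w \<noteq> 0 \<longrightarrow> length w = k}"

definition tmul :: "(nat list \<Rightarrow> 'a::field) \<Rightarrow> (nat list \<Rightarrow> 'a) \<Rightarrow> nat list \<Rightarrow> 'a" where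
  "tmul f g = (\<lambda>w. \<Sum>j\<le>length w. f (take j w) * g (drop j w))"

inductive_set lin_span :: "(nat list \<Rightarrow> 'a::field) set \<Rightarrow> (nat list \<Rightarrow> 'a) set"
  for S where
  zero: "(\<lambda>w. 0) \<in> lin_span S"
| step: "x \<in> S \<Longrightarrow> a \<in> lin_span S \<Longrightarrow> (\<lambda>w. c * x w + a w) \<in> lin_span S"

text \<open>The linear operator R on V (x) V is given by its matrix:
  R (e_a (x) e_b) = sum_(c,e) Rm c e a b * e_c (x) e_e.
  T_i (1 \<le> i < k) acts on V^{(x)k} as id^(i-1) (x) R (x) id^(k-i-1).\<close>
definition Tact :: "nat \<Rightarrow> (nat \<Rightarrow> nat \<Rightarrow> nat \<Rightarrow> nat \<Rightarrow> 'a::field) \<Rightarrow> nat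
    \<Rightarrow> (nat list \<Rightarrow> 'a) \<Rightarrow> nat list \<Rightarrow> 'a" where
  "Tact d Rm i f = (\<lambda>w. if set w \<subseteq> {..<d} \<and> 1 \<le> i \<and> i < length w
      then (\<Sum>a<d. \<Sum>b<d. Rm (w ! (i - 1)) (w ! i) a b * f (w[i - 1 := a, i := b]))
      else 0)"

text \<open>The operator T_1 T_2 ... T_j (T_j applied first).\<close>
fun Tprod :: "nat \<Rightarrow> (nat \<Rightarrow> nat \<Rightarrow> nat \<Rightarrow> nat \<Rightarrow> 'a::field) \<Rightarrow> nat
    \<Rightarrow> (nat list \<Rightarrow> 'a) \<Rightarrow> nat list \<Rightarrow> 'a" where
  "Tprod d Rm 0 f = f"
| "Tprod d Rm (Suc j) f = Tprod d Rm j (Tact d Rm (Suc j) f)"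

abbreviation Rop where "Rop d Rm \<equiv> Tact d Rm 1"

definition is_hecke_symmetry :: "nat \<Rightarrow> (nat \<Rightarrow> nat \<Rightarrow> nat \<Rightarrow> nat \<Rightarrow> 'a::field) \<Rightarrow> 'a \<Rightarrow> bool" where
  "is_hecke_symmetry d Rm q \<longleftrightarrow> q \<noteq> 0 \<and>
     (\<forall>f \<in> Tk d 2. let g = (\<lambda>w. Rop d Rm f w - q * f w) in
        (\<forall>w. Rop d Rm g w + g w = 0)) \<and>
     (\<forall>f \<in> Tk d 3. Tact d Rm 1 (Tact d Rm 2 (Tact d Rm 1 f))
                 = Tact d Rm 2 (Tact d Rm 1 (Tact d Rm 2 f)))"

definition Kq :: "nat \<Rightarrow> (nat \<Rightarrow> nat \<Rightarrow> nat \<Rightarrow> nat \<Rightarrow> 'a::field) \<Rightarrow> 'a \<Rightarrow> (nat list \<Rightarrow> 'a) set" where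
  "Kq d Rm q = {x \<in> Tk d 2. \<forall>w. Rop d Rm x w - q * x w = 0}"

definition Iid :: "nat \<Rightarrow> (nat \<Rightarrow> nat \<Rightarrow> nat \<Rightarrow> nat \<Rightarrow> 'a::field) \<Rightarrow> 'a \<Rightarrow> (nat list \<Rightarrow> 'a) set" where
  "Iid d Rm q = lin_span {tmul (tmul u x) v | u x v. u \<in> Tall d \<and> x \<in> Kq d Rm q \<and> v \<in> Tall d}"

definition Lk :: "nat \<Rightarrow> (nat \<Rightarrow> nat \<Rightarrow> nat \<Rightarrow> nat \<Rightarrow> 'a::field) \<Rightarrow> 'a \<Rightarrow> nat \<Rightarrow> nat \<Rightarrow> (nat list \<Rightarrow> 'a) set" where
  "Lk d Rm q n k = {a \<in> Tk d k. \<forall>b \<in> Tk d (n - k). tmul a b \<in> Iid d Rm q \<inter> Tk d n}"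

definition yact :: "nat \<Rightarrow> (nat \<Rightarrow> nat \<Rightarrow> nat \<Rightarrow> nat \<Rightarrow> 'a::field) \<Rightarrow> 'a \<Rightarrow> nat
    \<Rightarrow> (nat list \<Rightarrow> 'a) \<Rightarrow> nat list \<Rightarrow> 'a" where
  "yact d Rm q k f = (\<lambda>w. \<Sum>j<k. (-1) ^ j * q ^ (k - 1 - j) * Tprod d Rm j f w)"

end

theory Submission
  imports Defs
begin


lemma Tk_iff: "f \<in> Tk d m \<longleftrightarrow> (\<forall>w. f w \<noteq> 0 \<longrightarrow> length w = m \<and> set w \<subseteq> {..<d})"
proof
  assume "f \<in> Tk d m" thus "\<forall>w. f w \<noteq> 0 \<longrightarrow> length w = m \<and> set w \<subseteq> {..<d}"
    by (auto simp: Tk_def Tall_def)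
next
  assume h: "\<forall>w. f w \<noteq> 0 \<longrightarrow> length w = m \<and> set w \<subseteq> {..<d}"
  have "{w. f w \<noteq> 0} \<subseteq> {xs. set xs \<subseteq> {..<d} \<and> length xs = m}" using h by auto
  moreover have "finite {xs. set xs \<subseteq> {..<d} \<and> length xs = m}"
    by (rule finite_lists_length_eq) simp
  ultimately have "finite {w. f w \<noteq> 0}" by (rule finite_subset)
  thus "f \<in> Tk d m" using h by (auto simp: Tk_def Tall_def)
qed

lemma TkD: "f \<in> Tk d m \<Longrightarrow> f w \<noteq> 0 \<Longrightarrow> length w = m"
  and TkD2: "f \<in> Tk d m \<Longrightarrow> f w \<noteq> 0 \<Longrightarrow> set w \<subseteq> {..<d}"
  by (auto simp: Tk_iff)

lemma TkZ: "f \<in> Tk d m \<Longrightarrow> length w \<noteq> m \<Longrightarrow> f w = 0"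
  and TkZ2: "f \<in> Tk d m \<Longrightarrow> \<not> set w \<subseteq> {..<d} \<Longrightarrow> f w = 0"
  by (auto simp: Tk_iff)

lemma Tk_lin: "f \<in> Tk d m \<Longrightarrow> g \<in> Tk d m \<Longrightarrow> (\<lambda>w. c * f w + g w) \<in> Tk d m"
  unfolding Tk_iff
proof (intro allI impI)
  fix w assume f: "\<forall>w. f w \<noteq> 0 \<longrightarrow> length w = m \<and> set w \<subseteq> {..<d}"
    and g: "\<forall>w. g w \<noteq> 0 \<longrightarrow> length w = m \<and> set w \<subseteq> {..<d}" and "c * f w + g w \<noteq> 0"
  hence "f w \<noteq> 0 \<or> g w \<noteq> 0" by auto
  thus "length w = m \<and> set w \<subseteq> {..<d}" using f g by blast
qed

lemma Tk_zero: "(\<lambda>w. 0) \<in> Tk d m" by (auto simp: Tk_iff)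

lemma Tk_smult: "f \<in> Tk d m \<Longrightarrow> (\<lambda>w. c * f w) \<in> Tk d m"
  by (auto simp: Tk_iff)

lemma Tk_sum: "finite A \<Longrightarrow> (\<And>i. i \<in> A \<Longrightarrow> f i \<in> Tk d m) \<Longrightarrow> (\<lambda>w. \<Sum>i\<in>A. f i w) \<in> Tk d m"
proof (induction A rule: finite_induct)
  case empty thus ?case by (simp add: Tk_zero)
next
  case (insert x F)
  have "(\<lambda>w. 1 * f x w + (\<Sum>i\<in>F. f i w)) \<in> Tk d m"
    by (rule Tk_lin) (use insert in auto)
  thus ?case using insert by simp
qed

lemma span_add: "a \<in> lin_span S \<Longrightarrow> b \<in> lin_span S \<Longrightarrow> (\<lambda>w. c * a w + b w) \<in> lin_span S"
proof (induction a rule: lin_span.induct)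
  case zero thus ?case by simp
next
  case (step x a c')
  have "(\<lambda>w. c * a w + b w) \<in> lin_span S" using step by simp
  hence "(\<lambda>w. (c*c') * x w + (c * a w + b w)) \<in> lin_span S"
    using lin_span.step[OF step(1)] by blast
  thus ?case by (simp add: algebra_simps)
qed

lemma span_base: "x \<in> S \<Longrightarrow> x \<in> lin_span S"
proof -
  assume "x \<in> S"
  hence "(\<lambda>w. 1 * x w + (\<lambda>w. 0) w) \<in> lin_span S" by (rule lin_span.step) (rule lin_span.zero)
  thus ?thesis by simp
qed

lemma span_smult: "a \<in> lin_span S \<Longrightarrow> (\<lambda>w. c * a w) \<in> lin_span S"
proof -
  assume "a \<in> lin_span S"
  hence "(\<lambda>w. c * a w + (\<lambda>w. 0) w) \<in> lin_span S" by (rule span_add) (rule lin_span.zero)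
  thus ?thesis by simp
qed

lemma span_plus: "a \<in> lin_span S \<Longrightarrow> b \<in> lin_span S \<Longrightarrow> (\<lambda>w. a w + b w) \<in> lin_span S"
  using span_add[of a S b 1] by simp

lemma span_diff: "a \<in> lin_span S \<Longrightarrow> b \<in> lin_span S \<Longrightarrow> (\<lambda>w. a w - b w) \<in> lin_span S"
  using span_add[of b S a "-1"] by simp

lemma span_sum: "finite A \<Longrightarrow> (\<And>i. i \<in> A \<Longrightarrow> f i \<in> lin_span S) \<Longrightarrow> (\<lambda>w. \<Sum>i\<in>A. f i w) \<in> lin_span S"
proof (induction A rule: finite_induct)
  case empty thus ?case by (simp add: lin_span.zero)
next
  case (insert x F)
  thus ?case using span_plus[of "f x" S "\<lambda>w. \<Sum>i\<in>F. f i w"] by simp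
qed

lemma span_span: assumes "\<And>x. x \<in> S \<Longrightarrow> x \<in> lin_span T" "y \<in> lin_span S" shows "y \<in> lin_span T"
  using assms(2) proof (induction y rule: lin_span.induct)
  case zero thus ?case by (simp add: lin_span.zero)
next
  case (step x a c) thus ?case using span_add assms(1) by blast
qed

lemma span_Tk: assumes "S \<subseteq> Tk d m" "y \<in> lin_span S" shows "y \<in> Tk d m"
  using assms(2) proof (induction y rule: lin_span.induct)
  case zero thus ?case by (simp add: Tk_zero)
next
  case (step x a c) thus ?case using Tk_lin assms(1) by blast
qed

definition lin_op :: "((nat list \<Rightarrow> 'a::field) \<Rightarrow> (nat list \<Rightarrow> 'a)) \<Rightarrow> bool" where
  "lin_op F \<longleftrightarrow> (\<forall>c f g. F (\<lambda>w. c * f w + g w) = (\<lambda>w. c * F f w + F g w))"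

lemma lin_opD: "lin_op F \<Longrightarrow> F (\<lambda>w. c * f w + g w) = (\<lambda>w. c * F f w + F g w)"
  by (simp add: lin_op_def)

lemma lin_op_zero: "lin_op F \<Longrightarrow> F (\<lambda>w. 0) = (\<lambda>w. 0)"
  using lin_opD[of F "-1" "\<lambda>w. 0" "\<lambda>w. 0"] by simp

lemma lin_op_smult: "lin_op F \<Longrightarrow> F (\<lambda>w. c * f w) = (\<lambda>w. c * F f w)"
  using lin_opD[of F c f "\<lambda>w. 0"] lin_op_zero[of F] by simp

lemma lin_op_plus: "lin_op F \<Longrightarrow> F (\<lambda>w. f w + g w) = (\<lambda>w. F f w + F g w)"
  using lin_opD[of F 1 f g] by simp

lemma lin_op_diff: "lin_op F \<Longrightarrow> F (\<lambda>w. f w - g w) = (\<lambda>w. F f w - F g w)"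
  using lin_opD[of F "-1" g f] by (simp add: algebra_simps)

lemma lin_op_sum: assumes "lin_op F" "finite A" shows "F (\<lambda>w. \<Sum>i\<in>A. f i w) = (\<lambda>w. \<Sum>i\<in>A. F (f i) w)"
  using assms(2) proof (induction A rule: finite_induct)
  case empty thus ?case by (simp add: lin_op_zero assms(1))
next
  case (insert x F')
  thus ?case using lin_op_plus[OF assms(1), of "f x" "\<lambda>w. \<Sum>i\<in>F'. f i w"] by simp
qed

lemma lin_op_span: assumes "lin_op F" "\<And>x. x \<in> S \<Longrightarrow> F x \<in> lin_span T" "y \<in> lin_span S" shows "F y \<in> lin_span T"
  using assms(3) proof (induction y rule: lin_span.induct)
  case zero thus ?case by (simp add: lin_op_zero lin_span.zero assms(1))
next
  case (step x a c)
  thus ?case by (simp add: lin_opD span_add assms)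
qed

lemma lin_op_comp: "lin_op F \<Longrightarrow> lin_op G \<Longrightarrow> lin_op (\<lambda>f. F (G f))"
  by (simp add: lin_op_def)



lemma tmul_homL:
  assumes f: "f \<in> Tk d k"
  shows "tmul f g w = (if k \<le> length w then f (take k w) * g (drop k w) else 0)"
proof (cases "k \<le> length w")
  case True
  have z: "f (take j w) * g (drop j w) = 0" if "j \<in> {..length w} - {k}" for j
    using that TkZ[OF f, of "take j w"] by auto
  have "tmul f g w = f (take k w) * g (drop k w) + (\<Sum>j\<in>{..length w} - {k}. f (take j w) * g (drop j w))"
    unfolding tmul_def using True by (subst sum.remove[of _ k]) auto
  also have "(\<Sum>j\<in>{..length w} - {k}. f (take j w) * g (drop j w)) = 0"
    by (rule sum.neutral) (use z in blast)
  hence "f (take k w) * g (drop k w) + (\<Sum>j\<in>{..length w} - {k}. f (take j w) * g (drop j w)) = f (take k w) * g (drop k w)" by simp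
  finally show ?thesis using True by simp
next
  case False
  have z: "f (take j w) * g (drop j w) = 0" if "j \<in> {..length w}" for j
    using that TkZ[OF f, of "take j w"] False by auto
  have "(\<Sum>j\<le>length w. f (take j w) * g (drop j w)) = 0" by (rule sum.neutral) (use z in auto)
  thus ?thesis unfolding tmul_def using False by simp
qed

lemma tmul_homR:
  assumes g: "g \<in> Tk d l"
  shows "tmul f g w = (if l \<le> length w then f (take (length w - l) w) * g (drop (length w - l) w) else 0)"
proof (cases "l \<le> length w")
  case True
  have z: "f (take j w) * g (drop j w) = 0" if "j \<in> {..length w} - {length w - l}" for j
  proof -
    have "length (drop j w) \<noteq> l" using that True by auto
    thus ?thesis using TkZ[OF g, of "drop j w"] by simp
  qed
  have "tmul f g w = f (take (length w - l) w) * g (drop (length w - l) w) + (\<Sum>j\<in>{..length w} - {length w - l}. f (take j w) * g (drop j w))"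
    unfolding tmul_def using True by (subst sum.remove[of _ "length w - l"]) auto
  also have "(\<Sum>j\<in>{..length w} - {length w - l}. f (take j w) * g (drop j w)) = 0"
    by (rule sum.neutral) (use z in blast)
  hence "f (take (length w - l) w) * g (drop (length w - l) w) + (\<Sum>j\<in>{..length w} - {length w - l}. f (take j w) * g (drop j w)) = f (take (length w - l) w) * g (drop (length w - l) w)" by simp
  finally show ?thesis using True by simp
next
  case False
  have z: "f (take j w) * g (drop j w) = 0" if "j \<in> {..length w}" for j
    using that TkZ[OF g, of "drop j w"] False by auto
  have "(\<Sum>j\<le>length w. f (take j w) * g (drop j w)) = 0" by (rule sum.neutral) (use z in auto)
  thus ?thesis unfolding tmul_def using False by simp
qed

lemma tmul_Tk:
  assumes f: "f \<in> Tk d k" and g: "g \<in> Tk d l"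
  shows "tmul f g \<in> Tk d (k + l)"
  unfolding Tk_iff
proof (intro allI impI)
  fix w assume "tmul f g w \<noteq> 0"
  hence h: "k \<le> length w" "f (take k w) \<noteq> 0" "g (drop k w) \<noteq> 0"
    by (auto simp: tmul_homL[OF f] split: if_splits)
  have "length (take k w) = k" using TkD[OF f h(2)] .
  moreover have "length (drop k w) = l" using TkD[OF g h(3)] .
  moreover have "set (take k w) \<subseteq> {..<d}" using TkD2[OF f h(2)] .
  moreover have "set (drop k w) \<subseteq> {..<d}" using TkD2[OF g h(3)] .
  ultimately show "length w = k + l \<and> set w \<subseteq> {..<d}"
    by (metis append_take_drop_id le_sup_iff length_append set_append)
qed

lemma tmul_assoc:
  assumes f: "f \<in> Tk d k" and g: "g \<in> Tk d l"
  shows "tmul (tmul f g) h = tmul f (tmul g h)"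
proof
  fix w
  have fg: "tmul f g \<in> Tk d (k + l)" by (rule tmul_Tk[OF f g])
  show "tmul (tmul f g) h w = tmul f (tmul g h) w"
  proof (cases "k + l \<le> length w")
    case True
    have e1: "take k (take (k + l) w) = take k w" by (simp add: min_def)
    have e2: "drop k (take (k + l) w) = take l (drop k w)" by (simp add: drop_take)
    have e3: "drop l (drop k w) = drop (k + l) w" by (simp add: add.commute)
    show ?thesis unfolding tmul_homL[OF fg, of h w] tmul_homL[OF f] tmul_homL[OF g]
      using True by (simp add: e1 e2 e3 min_def ac_simps le_diff_conv2)
  next
    case False
    show ?thesis unfolding tmul_homL[OF fg, of h w] tmul_homL[OF f] tmul_homL[OF g]
      using False by (simp add: le_diff_conv2)
  qed
qed

lemma lin_op_tmulL: "lin_op (\<lambda>f. tmul f g)"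
  unfolding lin_op_def tmul_def
  by (auto simp: sum_distrib_left sum.distrib algebra_simps)

lemma lin_op_tmulR: "lin_op (\<lambda>g. tmul f g)"
  unfolding lin_op_def tmul_def
  by (auto simp: sum_distrib_left sum.distrib algebra_simps)

definition delta1 :: "nat \<Rightarrow> nat list \<Rightarrow> 'a::field" where
  "delta1 c = (\<lambda>w. if w = [c] then 1 else 0)"

definition slice :: "nat \<Rightarrow> (nat list \<Rightarrow> 'a) \<Rightarrow> nat list \<Rightarrow> 'a" where
  "slice c f = (\<lambda>w. f (c # w))"

definition rslice :: "nat \<Rightarrow> (nat list \<Rightarrow> 'a) \<Rightarrow> nat list \<Rightarrow> 'a" where
  "rslice c f = (\<lambda>w. f (w @ [c]))"

lemma delta1_Tk: "c < d \<Longrightarrow> (delta1 c :: nat list \<Rightarrow> 'a::field) \<in> Tk d 1"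
  by (auto simp: Tk_iff delta1_def)

lemma tmul_delta1: "tmul (delta1 c) g w = (case w of [] \<Rightarrow> 0 | x # w' \<Rightarrow> if x = c then g w' else 0)"
proof -
  have "(delta1 c :: nat list \<Rightarrow> 'a) \<in> Tk (Suc c) 1" by (rule delta1_Tk) simp
  from tmul_homL[OF this] show ?thesis
    by (cases w) (auto simp: delta1_def)
qed

lemma tmul_delta1R: "tmul g (delta1 c) w = (if w \<noteq> [] \<and> last w = c then g (butlast w) else 0)"
proof -
  have "(delta1 c :: nat list \<Rightarrow> 'a) \<in> Tk (Suc c) 1" by (rule delta1_Tk) simp
  from tmul_homR[OF this, of g w] show ?thesis
    apply (cases w rule: rev_cases)
    apply (auto simp: delta1_def butlast_conv_take)
    done
qed

lemma slice_tmul_delta1: "slice c (tmul (delta1 e) g) = (if c = e then g else (\<lambda>w. 0))"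
  by (auto simp: slice_def tmul_delta1)

lemma slice_Tk: assumes "f \<in> Tk d (Suc p)" shows "slice c f \<in> Tk d p"
  unfolding Tk_iff slice_def
proof (intro allI impI)
  fix w assume "f (c # w) \<noteq> 0"
  hence "length (c # w) = Suc p \<and> set (c # w) \<subseteq> {..<d}" using assms unfolding Tk_iff by blast
  thus "length w = p \<and> set w \<subseteq> {..<d}" by auto
qed

lemma rslice_Tk: assumes "f \<in> Tk d (Suc p)" shows "rslice c f \<in> Tk d p"
  unfolding Tk_iff rslice_def
proof (intro allI impI)
  fix w assume "f (w @ [c]) \<noteq> 0"
  hence "length (w @ [c]) = Suc p \<and> set (w @ [c]) \<subseteq> {..<d}" using assms unfolding Tk_iff by blast
  thus "length w = p \<and> set w \<subseteq> {..<d}" by auto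
qed

lemma lin_op_slice: "lin_op (slice c)"
  by (auto simp: lin_op_def slice_def)

lemma DEC:
  assumes f: "f \<in> Tk d (Suc p)"
  shows "f = (\<lambda>w. \<Sum>c<d. tmul (delta1 c) (slice c f) w)"
proof
  fix w
  show "f w = (\<Sum>c<d. tmul (delta1 c) (slice c f) w)"
  proof (cases w)
    case Nil thus ?thesis using TkZ[OF f, of w] by (simp add: tmul_delta1)
  next
    case (Cons x w')
    show ?thesis
    proof (cases "x < d")
      case True
      thus ?thesis using Cons by (simp add: tmul_delta1 slice_def)
    next
      case False
      hence "f w = 0" using TkZ2[OF f, of w] Cons by auto
      thus ?thesis using Cons False by (auto simp: tmul_delta1 slice_def)
    qed
  qed
qed

lemma DECR:
  assumes f: "f \<in> Tk d (Suc p)"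
  shows "f = (\<lambda>w. \<Sum>c<d. tmul (rslice c f) (delta1 c) w)"
proof
  fix w
  show "f w = (\<Sum>c<d. tmul (rslice c f) (delta1 c) w)"
  proof (cases w rule: rev_cases)
    case Nil thus ?thesis using TkZ[OF f, of w] by (simp add: tmul_delta1R)
  next
    case (snoc w' x)
    show ?thesis
    proof (cases "x < d")
      case True
      thus ?thesis using snoc by (simp add: tmul_delta1R rslice_def)
    next
      case False
      hence "f w = 0" using TkZ2[OF f, of w] snoc by auto
      thus ?thesis using snoc False by (auto simp: tmul_delta1R rslice_def)
    qed
  qed
qed

lemma slice_tmul:
  assumes y: "y \<in> Tk d (Suc p)"
  shows "slice c (tmul y b) = tmul (slice c y) b"
proof
  fix w
  have sy: "slice c y \<in> Tk d p" by (rule slice_Tk[OF y])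
  show "slice c (tmul y b) w = tmul (slice c y) b w"
    unfolding slice_def tmul_homL[OF y] using tmul_homL[OF sy, of b w]
    by (simp add: slice_def)
qed



lemma lin_op_Tact: "lin_op (Tact d Rm i)"
  unfolding lin_op_def Tact_def
  by (auto simp: sum_distrib_left sum.distrib algebra_simps)

lemma Tact_Tk:
  assumes f: "f \<in> Tk d m"
  shows "Tact d Rm i f \<in> Tk d m"
  unfolding Tk_iff
proof (intro allI impI)
  fix w assume h: "Tact d Rm i f w \<noteq> 0"
  hence c: "set w \<subseteq> {..<d}" "1 \<le> i" "i < length w" by (auto simp: Tact_def split: if_splits)
  from h c obtain a b where "f (w[i - 1 := a, i := b]) \<noteq> 0"
    by (auto simp: Tact_def elim!: sum.not_neutral_contains_not_neutral)
  hence "length (w[i - 1 := a, i := b]) = m" by (rule TkD[OF f])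
  thus "length w = m \<and> set w \<subseteq> {..<d}" using c by simp
qed

lemma Tact_tmul_L:
  assumes f: "f \<in> Tk d k" and i: "1 \<le> i" "i < k" and g: "\<forall>w. g w \<noteq> 0 \<longrightarrow> set w \<subseteq> {..<d}"
  shows "Tact d Rm i (tmul f g) = tmul (Tact d Rm i f) g"
proof
  fix w
  have tf: "Tact d Rm i f \<in> Tk d k" by (rule Tact_Tk[OF f])
  show "Tact d Rm i (tmul f g) w = tmul (Tact d Rm i f) g w"
  proof (cases "k \<le> length w")
    case False
    thus ?thesis unfolding tmul_homL[OF tf] by (simp add: Tact_def tmul_homL[OF f])
  next
    case kw: True
    have tk: "take k (w[i - Suc 0 := a, i := b]) = (take k w)[i - Suc 0 := a, i := b]" for a b
      by (simp add: take_update_swap)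
    have dk: "drop k (w[i - 1 := a, i := b]) = drop k w" for a b
      using i by (simp add: drop_update_cancel)
    have n1: "take k w ! (i - 1) = w ! (i - 1)" "take k w ! i = w ! i" using i kw by auto
    show ?thesis
    proof (cases "set w \<subseteq> {..<d}")
      case True
      hence st: "set (take k w) \<subseteq> {..<d}" by (meson order_trans set_take_subset)
      show ?thesis
        unfolding tmul_homL[OF tf] unfolding Tact_def tmul_homL[OF f]
        using True st kw i by (simp add: tk dk n1 sum_distrib_left algebra_simps)
    next
      case False
      have "set (take k w) \<subseteq> {..<d} \<Longrightarrow> \<not> set (drop k w) \<subseteq> {..<d}"
        using False by (metis append_take_drop_id le_sup_iff set_append)
      hence z: "Tact d Rm i f (take k w) * g (drop k w) = 0"
        using g by (auto simp: Tact_def)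
      show ?thesis using False kw z unfolding tmul_homL[OF tf] by (simp add: Tact_def)
    qed
  qed
qed

lemma Tact_tmul_R:
  assumes f: "f \<in> Tk d k" and i: "k < i"
  shows "Tact d Rm i (tmul f g) = tmul f (Tact d Rm (i - k) g)"
proof
  fix w
  show "Tact d Rm i (tmul f g) w = tmul f (Tact d Rm (i - k) g) w"
  proof (cases "k \<le> length w")
    case False
    thus ?thesis by (simp add: Tact_def tmul_homL[OF f])
  next
    case kw: True
    have tk: "take k (w[i - 1 := a, i := b]) = take k w" for a b
      using i by (simp add: take_update_cancel)
    have dk: "drop k (w[i - Suc 0 := a, i := b]) = (drop k w)[i - Suc k := a, i - k := b]" for a b
      using i by (simp add: drop_update_swap)
    have c1: "(Suc 0 \<le> i - k \<and> i - k < length w - k) = (i < length w)" using i kw by auto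
    have n1: "drop k w ! (i - k - 1) = w ! (i - 1)" "drop k w ! (i - k) = w ! i" using i kw
      by (auto simp: nth_drop)
    show ?thesis
    proof (cases "set w \<subseteq> {..<d}")
      case True
      hence st: "set (drop k w) \<subseteq> {..<d}" by (meson order_trans set_drop_subset)
      have e: "i - k - 1 = i - Suc k" by simp
      show ?thesis
        unfolding Tact_def tmul_homL[OF f]
        using True st kw i by (simp add: tk dk c1 n1[unfolded e] sum_distrib_left algebra_simps e)
    next
      case False
      have "set (drop k w) \<subseteq> {..<d} \<Longrightarrow> \<not> set (take k w) \<subseteq> {..<d}"
        using False by (metis append_take_drop_id le_sup_iff set_append)
      hence z: "f (take k w) * Tact d Rm (i - k) g (drop k w) = 0"
        using TkZ2[OF f] by (auto simp: Tact_def)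
      show ?thesis using False kw z by (simp add: Tact_def tmul_homL[OF f])
    qed
  qed
qed

lemma slice_Tact:
  assumes "c < d" "1 \<le> i"
  shows "slice c (Tact d Rm (Suc i) h) = Tact d Rm i (slice c h)"
proof
  fix w
  have e: "(c # w)[i := a, Suc i := b] = c # w[i - 1 := a, i := b]" for a b
    using assms by (cases i) auto
  show "slice c (Tact d Rm (Suc i) h) w = Tact d Rm i (slice c h) w"
    using assms by (cases i) (auto simp: slice_def Tact_def)
qed



fun Tseg :: "nat \<Rightarrow> (nat \<Rightarrow> nat \<Rightarrow> nat \<Rightarrow> nat \<Rightarrow> 'a::field) \<Rightarrow> nat \<Rightarrow> nat
    \<Rightarrow> (nat list \<Rightarrow> 'a) \<Rightarrow> nat list \<Rightarrow> 'a" where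
  "Tseg d Rm s 0 f = f"
| "Tseg d Rm s (Suc l) f = Tseg d Rm s l (Tact d Rm (s + l) f)"

definition vd :: "nat \<Rightarrow> (nat list \<Rightarrow> 'a::field) \<Rightarrow> bool" where
  "vd d g \<longleftrightarrow> (\<forall>w. g w \<noteq> 0 \<longrightarrow> set w \<subseteq> {..<d})"

lemma Tk_vd: "g \<in> Tk d m \<Longrightarrow> vd d g" by (auto simp: vd_def Tk_iff)

lemma Tprod_Tseg: "Tprod d Rm j f = Tseg d Rm 1 j f"
  by (induction j arbitrary: f) auto

lemma Tseg_add: "Tseg d Rm s (a + b) f = Tseg d Rm s a (Tseg d Rm (s + a) b f)"
  by (induction b arbitrary: f) (auto simp: add.assoc)

lemma Tseg_Tk: "f \<in> Tk d m \<Longrightarrow> Tseg d Rm s l f \<in> Tk d m"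
  by (induction l arbitrary: f) (auto simp: Tact_Tk)

lemma lin_op_Tseg: "lin_op (Tseg d Rm s l)"
proof (induction l)
  case 0 thus ?case by (simp add: lin_op_def)
next
  case (Suc l)
  have "lin_op (\<lambda>f. Tseg d Rm s l (Tact d Rm (s + l) f))"
    by (rule lin_op_comp[OF Suc lin_op_Tact])
  thus ?case by simp
qed

lemma Tseg_tmul_L:
  assumes "a \<in> Tk d k" "1 \<le> s" "s + l \<le> k" "vd d z"
  shows "Tseg d Rm s l (tmul a z) = tmul (Tseg d Rm s l a) z"
  using assms
proof (induction l arbitrary: a)
  case 0 thus ?case by simp
next
  case (Suc l)
  have "Tact d Rm (s + l) (tmul a z) = tmul (Tact d Rm (s + l) a) z"
    by (rule Tact_tmul_L) (use Suc.prems in \<open>auto simp: vd_def\<close>)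
  moreover have "Tact d Rm (s + l) a \<in> Tk d k" by (rule Tact_Tk[OF Suc.prems(1)])
  ultimately show ?case using Suc by simp
qed

lemma Tseg_tmul_R:
  assumes "a \<in> Tk d k" "1 \<le> s"
  shows "Tseg d Rm (s + k) l (tmul a z) = tmul a (Tseg d Rm s l z)"
proof (induction l arbitrary: z)
  case 0 thus ?case by simp
next
  case (Suc l)
  have "Tact d Rm (s + k + l) (tmul a z) = tmul a (Tact d Rm (s + l) z)"
    using Tact_tmul_R[OF assms(1), of "s + k + l"] assms(2) by simp
  thus ?case using Suc by simp
qed



lemma sum_delta2:
  fixes a b d :: nat and F :: "nat \<Rightarrow> nat \<Rightarrow> 'a::field"
  assumes "a < d" "b < d"
  shows "(\<Sum>x<d. \<Sum>y<d. F x y * (if x = a \<and> y = b then 1 else 0)) = (F a b :: 'a::field)"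
proof -
  have "(\<Sum>y<d. F x y * (if x = a \<and> y = b then 1 else 0)) = (if x = a then F x b else 0)" for x
  proof (cases "x = a")
    case True
    have "F x y * (if x = a \<and> y = b then 1 else 0) = (if y = b then F x b else 0)" for y
      using True by simp
    hence "(\<Sum>y<d. F x y * (if x = a \<and> y = b then 1 else 0)) = (\<Sum>y<d. if y = b then F x b else 0)" by simp
    also have "\<dots> = (if b \<in> {..<d} then F x b else 0)" by (rule sum.delta) simp
    finally show ?thesis using True assms by simp
  qed simp
  thus ?thesis using assms by simp
qed

lemma hecke_mat:
  assumes H: "is_hecke_symmetry d Rm q" and abce: "a < d" "b < d" "c < d" "e < d"
  shows "(\<Sum>x<d. \<Sum>y<d. Rm c e x y * Rm x y a b) = (q - 1) * Rm c e a b + (if c = a \<and> e = b then q else 0)"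
proof -
  define f :: "nat list \<Rightarrow> 'a" where "f = (\<lambda>w. if w = [a, b] then 1 else 0)"
  have fT: "f \<in> Tk d 2" using abce by (auto simp: Tk_iff f_def)
  define g where "g = (\<lambda>w. Rop d Rm f w - q * f w)"
  from H fT have "\<forall>w. Rop d Rm g w + g w = 0"
    unfolding is_hecke_symmetry_def g_def Let_def by blast
  hence E: "Rop d Rm g [c, e] + g [c, e] = 0" by blast
  have Rf: "Rop d Rm f [x, y] = Rm x y a b" if "x < d" "y < d" for x y
  proof -
    have "Rop d Rm f [x, y] = (\<Sum>a'<d. \<Sum>b'<d. Rm x y a' b' * (if a' = a \<and> b' = b then 1 else 0))"
      using that by (simp add: Tact_def f_def)
    thus ?thesis using sum_delta2[OF abce(1,2), of "\<lambda>a' b'. Rm x y a' b'"] by simp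
  qed
  have g2: "g [x, y] = Rm x y a b - q * (if x = a \<and> y = b then 1 else 0)" if "x < d" "y < d" for x y
    using Rf[OF that] by (simp add: g_def f_def)
  have "Rop d Rm g [c, e] = (\<Sum>x<d. \<Sum>y<d. Rm c e x y * g [x, y])"
    using abce by (simp add: Tact_def)
  also have "\<dots> = (\<Sum>x<d. \<Sum>y<d. Rm c e x y * Rm x y a b) - q * (\<Sum>x<d. \<Sum>y<d. Rm c e x y * (if x = a \<and> y = b then 1 else 0))"
    by (simp add: g2 algebra_simps sum_subtractf sum_distrib_left)
  also have "\<dots> = (\<Sum>x<d. \<Sum>y<d. Rm c e x y * Rm x y a b) - q * Rm c e a b"
    using sum_delta2[OF abce(1,2), of "\<lambda>x y. Rm c e x y"] by simp
  finally have "(\<Sum>x<d. \<Sum>y<d. Rm c e x y * Rm x y a b) - q * Rm c e a b + g [c, e] = 0" using E by simp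
  moreover have "g [c, e] = Rm c e a b - q * (if c = a \<and> e = b then 1 else 0)" by (rule g2[OF abce(3,4)])
  ultimately show ?thesis by (auto simp: algebra_simps split: if_splits)
qed

lemma swap4:
  "(\<Sum>a\<in>A. \<Sum>b\<in>B. X a b * (\<Sum>a'\<in>C. \<Sum>b'\<in>D. Y a b a' b' * F a' b'))
   = (\<Sum>a'\<in>C. \<Sum>b'\<in>D. (\<Sum>a\<in>A. \<Sum>b\<in>B. X a b * Y a b a' b') * (F a' b' :: 'a::field))"
proof -
  have "(\<Sum>a\<in>A. \<Sum>b\<in>B. X a b * (\<Sum>a'\<in>C. \<Sum>b'\<in>D. Y a b a' b' * F a' b'))
     = (\<Sum>a\<in>A. \<Sum>b\<in>B. \<Sum>a'\<in>C. \<Sum>b'\<in>D. X a b * Y a b a' b' * F a' b')"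
    by (simp add: sum_distrib_left mult.assoc)
  also have "\<dots> = (\<Sum>a\<in>A. \<Sum>a'\<in>C. \<Sum>b\<in>B. \<Sum>b'\<in>D. X a b * Y a b a' b' * F a' b')"
    by (rule sum.cong[OF refl], rule sum.swap)
  also have "\<dots> = (\<Sum>a'\<in>C. \<Sum>a\<in>A. \<Sum>b\<in>B. \<Sum>b'\<in>D. X a b * Y a b a' b' * F a' b')"
    by (rule sum.swap)
  also have "\<dots> = (\<Sum>a'\<in>C. \<Sum>a\<in>A. \<Sum>b'\<in>D. \<Sum>b\<in>B. X a b * Y a b a' b' * F a' b')"
    by (rule sum.cong[OF refl], rule sum.cong[OF refl], rule sum.swap)
  also have "\<dots> = (\<Sum>a'\<in>C. \<Sum>b'\<in>D. \<Sum>a\<in>A. \<Sum>b\<in>B. X a b * Y a b a' b' * F a' b')"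
    by (rule sum.cong[OF refl], rule sum.swap)
  also have "\<dots> = (\<Sum>a'\<in>C. \<Sum>b'\<in>D. (\<Sum>a\<in>A. \<Sum>b\<in>B. X a b * Y a b a' b') * F a' b')"
    by (simp add: sum_distrib_right)
  finally show ?thesis .
qed

lemma Tact_sq:
  assumes H: "is_hecke_symmetry d Rm q" and f: "f \<in> Tk d m" and i: "1 \<le> i" "i < m"
  shows "Tact d Rm i (Tact d Rm i f) = (\<lambda>w. (q - 1) * Tact d Rm i f w + q * f w)"
proof
  fix w
  show "Tact d Rm i (Tact d Rm i f) w = (q - 1) * Tact d Rm i f w + q * f w"
  proof (cases "set w \<subseteq> {..<d} \<and> i < length w")
    case False
    hence "f w = 0" using TkZ[OF f] TkZ2[OF f] i by (cases "set w \<subseteq> {..<d}") auto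
    moreover have z: "\<And>g. Tact d Rm i g w = 0" using False by (auto simp: Tact_def)
    ultimately show ?thesis by (simp only: z) simp
  next
    case True
    hence sw: "set w \<subseteq> {..<d}" and iw: "i < length w" by auto
    have "w ! (i - 1) \<in> set w" "w ! i \<in> set w" using iw by (auto intro!: nth_mem)
    hence wi: "w ! (i - 1) < d" "w ! i < d" using sw by auto
    have upd: "w[i - Suc 0 := a, i := b, i - Suc 0 := a', i := b'] = w[i - Suc 0 := a', i := b']" for a b a' b'
      using i by (metis diff_less less_numeral_extra(1) less_one list_update_overwrite list_update_swap nat_neq_iff zero_less_one)
    have inner: "Tact d Rm i f (w[i - 1 := a, i := b]) = (\<Sum>a'<d. \<Sum>b'<d. Rm a b a' b' * f (w[i - 1 := a', i := b']))"
      if "a < d" "b < d" for a b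
    proof -
      have "set (w[i - 1 := a, i := b]) \<subseteq> {..<d}"
        using sw that by (meson order_trans set_update_subset_insert insert_subset lessThan_iff)
      moreover have "w[i - 1 := a, i := b] ! (i - 1) = a" "w[i - 1 := a, i := b] ! i = b"
        using i iw by (auto simp: nth_list_update)
      ultimately show ?thesis using i iw by (simp add: Tact_def upd)
    qed
    have "Tact d Rm i (Tact d Rm i f) w = (\<Sum>a<d. \<Sum>b<d. Rm (w ! (i - 1)) (w ! i) a b * (\<Sum>a'<d. \<Sum>b'<d. Rm a b a' b' * f (w[i - 1 := a', i := b'])))"
    proof -
      have "Tact d Rm i (Tact d Rm i f) w = (\<Sum>a<d. \<Sum>b<d. Rm (w ! (i - 1)) (w ! i) a b * Tact d Rm i f (w[i - 1 := a, i := b]))"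
        unfolding Tact_def[of d Rm i "Tact d Rm i f"] using True i by simp
      also have "\<dots> = (\<Sum>a<d. \<Sum>b<d. Rm (w ! (i - 1)) (w ! i) a b * (\<Sum>a'<d. \<Sum>b'<d. Rm a b a' b' * f (w[i - 1 := a', i := b'])))"
        by (intro sum.cong refl) (use inner in simp)
      finally show ?thesis .
    qed
    also have "\<dots> = (\<Sum>a'<d. \<Sum>b'<d. (\<Sum>a<d. \<Sum>b<d. Rm (w ! (i - 1)) (w ! i) a b * Rm a b a' b') * f (w[i - 1 := a', i := b']))"
      by (rule swap4)
    also have "\<dots> = (\<Sum>a'<d. \<Sum>b'<d. ((q - 1) * Rm (w ! (i - 1)) (w ! i) a' b' + (if w ! (i - 1) = a' \<and> w ! i = b' then q else 0)) * f (w[i - 1 := a', i := b']))"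
      using hecke_mat[OF H _ _ wi] by simp
    also have "\<dots> = (q - 1) * (\<Sum>a'<d. \<Sum>b'<d. Rm (w ! (i - 1)) (w ! i) a' b' * f (w[i - 1 := a', i := b']))
        + q * (\<Sum>a'<d. \<Sum>b'<d. (if a' = w ! (i - 1) \<and> b' = w ! i then 1 else 0) * f (w[i - 1 := a', i := b']))"
    proof -
      have "(\<Sum>a'<d. \<Sum>b'<d. ((q - 1) * Rm (w ! (i - 1)) (w ! i) a' b' + (if w ! (i - 1) = a' \<and> w ! i = b' then q else 0)) * f (w[i - 1 := a', i := b']))
          = (\<Sum>a'<d. \<Sum>b'<d. (q - 1) * (Rm (w ! (i - 1)) (w ! i) a' b' * f (w[i - 1 := a', i := b'])) + q * ((if a' = w ! (i - 1) \<and> b' = w ! i then 1 else 0) * f (w[i - 1 := a', i := b'])))"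
        by (intro sum.cong refl) (auto simp: algebra_simps)
      also have "\<dots> = (q - 1) * (\<Sum>a'<d. \<Sum>b'<d. Rm (w ! (i - 1)) (w ! i) a' b' * f (w[i - 1 := a', i := b']))
        + q * (\<Sum>a'<d. \<Sum>b'<d. (if a' = w ! (i - 1) \<and> b' = w ! i then 1 else 0) * f (w[i - 1 := a', i := b']))"
        by (simp only: sum.distrib sum_distrib_left)
      finally show ?thesis .
    qed
    also have "(\<Sum>a'<d. \<Sum>b'<d. (if a' = w ! (i - 1) \<and> b' = w ! i then 1 else 0) * f (w[i - 1 := a', i := b'])) = f (w[i - 1 := w ! (i - 1), i := w ! i])"
      using sum_delta2[OF wi, of "\<lambda>a' b'. f (w[i - 1 := a', i := b'])"] by (simp add: mult.commute)
    also have "w[i - 1 := w ! (i - 1), i := w ! i] = w" by simp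
    finally show ?thesis using True i by (simp add: Tact_def)
  qed
qed

definition Tinv :: "nat \<Rightarrow> (nat \<Rightarrow> nat \<Rightarrow> nat \<Rightarrow> nat \<Rightarrow> 'a::field) \<Rightarrow> 'a \<Rightarrow> nat \<Rightarrow> (nat list \<Rightarrow> 'a) \<Rightarrow> nat list \<Rightarrow> 'a" where
  "Tinv d Rm q i f = (\<lambda>w. (Tact d Rm i f w - (q - 1) * f w) / q)"

lemma hecke_q: "is_hecke_symmetry d Rm q \<Longrightarrow> q \<noteq> 0"
  by (simp add: is_hecke_symmetry_def)

lemma Tinv_eq: "Tinv d Rm q i f = (\<lambda>w. (1/q) * Tact d Rm i f w + (- (q - 1)/q) * f w)"
  by (rule ext) (simp add: Tinv_def field_split_simps)

lemma Tinv_Tk: "f \<in> Tk d m \<Longrightarrow> Tinv d Rm q i f \<in> Tk d m"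
  unfolding Tinv_eq by (intro Tk_lin Tk_smult Tact_Tk)

lemma Tact_Tinv:
  assumes H: "is_hecke_symmetry d Rm q" and f: "f \<in> Tk d m" and i: "1 \<le> i" "i < m"
  shows "Tact d Rm i (Tinv d Rm q i f) = f"
proof -
  have q: "q \<noteq> 0" by (rule hecke_q[OF H])
  have "Tinv d Rm q i f = (\<lambda>w. (1/q) * Tact d Rm i f w + (- (q - 1)/q) * f w)"
    by (rule Tinv_eq)
  have l1: "Tact d Rm i (\<lambda>w. (1/q) * Tact d Rm i f w + (\<lambda>w. (- (q - 1)/q) * f w) w) = (\<lambda>w. (1/q) * Tact d Rm i (Tact d Rm i f) w + Tact d Rm i (\<lambda>w. (- (q - 1)/q) * f w) w)"
    by (rule lin_opD[OF lin_op_Tact])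
  have l2: "Tact d Rm i (\<lambda>w. (- (q - 1)/q) * f w) = (\<lambda>w. (- (q - 1)/q) * Tact d Rm i f w)"
    by (rule lin_op_smult[OF lin_op_Tact])
  have "Tact d Rm i (Tinv d Rm q i f) = (\<lambda>w. (1/q) * Tact d Rm i (Tact d Rm i f) w + (- (q - 1)/q) * Tact d Rm i f w)"
    unfolding \<open>Tinv d Rm q i f = _\<close> using l1 l2 by simp
  also have "\<dots> = f" using q by (auto simp: Tact_sq[OF H f i] field_simps)
  finally show ?thesis .
qed

lemma Tseg_surj:
  assumes H: "is_hecke_symmetry d Rm q" and z: "z \<in> Tk d p" and j: "j < p"
  shows "\<exists>z'. z' \<in> Tk d p \<and> Tseg d Rm 1 j z' = z"
  using j
proof (induction j)
  case 0 thus ?case using z by (intro exI[of _ z]) simp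
next
  case (Suc j)
  then obtain w where w: "w \<in> Tk d p" "Tseg d Rm 1 j w = z" by auto
  have "Tact d Rm (Suc j) (Tinv d Rm q (Suc j) w) = w"
    by (rule Tact_Tinv[OF H w(1)]) (use Suc.prems in auto)
  thus ?case using w Tinv_Tk[OF w(1)] by (intro exI[of _ "Tinv d Rm q (Suc j) w"]) simp
qed

lemma Kq_Tk: "x \<in> Kq d Rm q \<Longrightarrow> x \<in> Tk d 2" by (simp add: Kq_def)

lemma Kq_act: "x \<in> Kq d Rm q \<Longrightarrow> Tact d Rm 1 x = (\<lambda>w. q * x w)"
  by (auto simp: Kq_def)

lemma braid3:
  assumes H: "is_hecke_symmetry d Rm q" and x: "x \<in> Kq d Rm q" and e: "e < d"
  defines "h \<equiv> Tact d Rm 1 (Tact d Rm 2 (tmul x (delta1 e)))"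
  shows "h \<in> Tk d 3" "\<And>c. c < d \<Longrightarrow> slice c h \<in> Kq d Rm q"
proof -
  have xT: "x \<in> Tk d 2" by (rule Kq_Tk[OF x])
  have f3: "tmul x (delta1 e) \<in> Tk d 3" using tmul_Tk[OF xT delta1_Tk[OF e]] by simp
  show hT: "h \<in> Tk d 3" unfolding h_def by (intro Tact_Tk f3)
  have "Tact d Rm 1 (tmul x (delta1 e)) = tmul (Tact d Rm 1 x) (delta1 e)"
    by (rule Tact_tmul_L[OF xT]) (use Tk_vd[OF delta1_Tk[OF e]] in \<open>auto simp: vd_def\<close>)
  also have "\<dots> = tmul (\<lambda>w. q * x w) (delta1 e)" by (simp only: Kq_act[OF x])
  also have "\<dots> = (\<lambda>w. q * tmul x (delta1 e) w)" by (rule lin_op_smult[OF lin_op_tmulL])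
  finally have t1: "Tact d Rm 1 (tmul x (delta1 e)) = (\<lambda>w. q * tmul x (delta1 e) w)" .
  have br: "Tact d Rm 1 (Tact d Rm 2 (Tact d Rm 1 (tmul x (delta1 e)))) = Tact d Rm 2 (Tact d Rm 1 (Tact d Rm 2 (tmul x (delta1 e))))"
    using H f3 unfolding is_hecke_symmetry_def by blast
  have "Tact d Rm 2 h = (\<lambda>w. q * h w)"
    using br unfolding h_def t1 by (simp add: lin_op_smult[OF lin_op_Tact])
  fix c assume c: "c < d"
  have "Tact d Rm 1 (slice c h) = slice c (Tact d Rm 2 h)"
    using slice_Tact[OF c, of 1 Rm h] by (simp add: numeral_2_eq_2)
  also have "\<dots> = (\<lambda>w. q * slice c h w)" using \<open>Tact d Rm 2 h = _\<close> by (simp add: slice_def)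
  finally have "Tact d Rm 1 (slice c h) = (\<lambda>w. q * slice c h w)" .
  moreover have "slice c h \<in> Tk d 2" using slice_Tk[of h d 2] hT by (simp add: numeral_3_eq_3 numeral_2_eq_2)
  ultimately show "slice c h \<in> Kq d Rm q" by (simp add: Kq_def)
qed



definition G :: "nat \<Rightarrow> (nat \<Rightarrow> nat \<Rightarrow> nat \<Rightarrow> nat \<Rightarrow> 'a::field) \<Rightarrow> 'a \<Rightarrow> nat \<Rightarrow> (nat list \<Rightarrow> 'a) set" where
  "G d Rm q m = {tmul u (tmul x v) | u x v i. u \<in> Tk d i \<and> x \<in> Kq d Rm q \<and> v \<in> Tk d (m - 2 - i) \<and> i + 2 \<le> m}"

definition J where "J d Rm q m = lin_span (G d Rm q m)"

definition VJ where "VJ d Rm q m = lin_span {tmul (delta1 c) g | c g. c < d \<and> g \<in> J d Rm q (m - 1)}"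

lemma G_I: "u \<in> Tk d i \<Longrightarrow> x \<in> Kq d Rm q \<Longrightarrow> v \<in> Tk d l \<Longrightarrow> m = i + 2 + l \<Longrightarrow> tmul u (tmul x v) \<in> G d Rm q m"
  unfolding G_def by (rule CollectI, rule exI[of _ u], rule exI[of _ x], rule exI[of _ v], rule exI[of _ i]) auto

lemma G_Tk: "G d Rm q m \<subseteq> Tk d m"
proof
  fix f assume "f \<in> G d Rm q m"
  then obtain u x v i where f: "f = tmul u (tmul x v)" "u \<in> Tk d i" "x \<in> Kq d Rm q" "v \<in> Tk d (m - 2 - i)" "i + 2 \<le> m"
    unfolding G_def by blast
  have xv: "tmul x v \<in> Tk d (2 + (m - 2 - i))" by (rule tmul_Tk[OF Kq_Tk[OF f(3)] f(4)])
  have e: "i + (2 + (m - 2 - i)) = m" using f(5) by arith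
  from tmul_Tk[OF f(2) xv] show "f \<in> Tk d m" unfolding e f(1) .
qed

lemma J_Tk: "f \<in> J d Rm q m \<Longrightarrow> f \<in> Tk d m"
  unfolding J_def using span_Tk[OF G_Tk] by blast

lemma Tk_Tall: "f \<in> Tk d m \<Longrightarrow> f \<in> Tall d" by (simp add: Tk_def)

lemma G_Iid: "f \<in> G d Rm q m \<Longrightarrow> f \<in> Iid d Rm q"
proof -
  assume "f \<in> G d Rm q m"
  then obtain u x v i where f: "f = tmul u (tmul x v)" "u \<in> Tk d i" "x \<in> Kq d Rm q" "v \<in> Tk d (m - 2 - i)"
    unfolding G_def by blast
  have "f = tmul (tmul u x) v" using f tmul_assoc[OF f(2) Kq_Tk[OF f(3)]] by simp
  thus ?thesis unfolding Iid_def using f Tk_Tall by (intro span_base) blast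
qed

lemma J_Iid: "f \<in> J d Rm q m \<Longrightarrow> f \<in> Iid d Rm q"
  unfolding J_def Iid_def using span_span[of "G d Rm q m"] G_Iid[unfolded Iid_def] by blast

definition hom :: "nat \<Rightarrow> (nat list \<Rightarrow> 'a::field) \<Rightarrow> nat list \<Rightarrow> 'a" where
  "hom m f = (\<lambda>w. if length w = m then f w else 0)"

lemma lin_op_hom: "lin_op (hom m)" by (auto simp: lin_op_def hom_def)

lemma hom_Tk: "f \<in> Tall d \<Longrightarrow> hom m f \<in> Tk d m"
  by (auto simp: Tk_iff hom_def Tall_def)

lemma hom_id: "f \<in> Tk d m \<Longrightarrow> hom m f = f"
  by (auto simp: hom_def TkZ)

lemma sum_shift2: fixes m :: nat shows "(\<Sum>j\<le>m. if 2 \<le> j then F (j - 2) else 0) = (\<Sum>i<m - 1. (F i :: 'a::field))"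
proof (induction m)
  case 0 thus ?case by simp
next
  case (Suc m)
  show ?case
  proof (cases m)
    case 0 thus ?thesis by simp
  next
    case (Suc m')
    thus ?thesis using Suc.IH by simp
  qed
qed

lemma hom_gen:
  assumes u: "u \<in> Tall d" and v: "v \<in> Tall d" and x: "x \<in> Kq d Rm q"
  shows "hom m (tmul (tmul u x) v) \<in> J d Rm q m"
proof -
  have xT: "x \<in> Tk d 2" by (rule Kq_Tk[OF x])
  have eq: "hom m (tmul (tmul u x) v) = (\<lambda>w. \<Sum>i<m - 1. tmul (hom i u) (tmul x (hom (m - 2 - i) v)) w)"
  proof
    fix w
    show "hom m (tmul (tmul u x) v) w = (\<Sum>i<m - 1. tmul (hom i u) (tmul x (hom (m - 2 - i) v)) w)"
    proof (cases "length w = m")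
      case False
      have "tmul (hom i u) (tmul x (hom (m - 2 - i) v)) w = 0" if "i < m - 1" for i
      proof -
        have xv: "tmul x (hom (m - 2 - i) v) \<in> Tk d (2 + (m - 2 - i))" by (rule tmul_Tk[OF xT hom_Tk[OF v]])
        have e: "i + (2 + (m - 2 - i)) = m" using that by arith
        from tmul_Tk[OF hom_Tk[OF u, of i] xv] have "tmul (hom i u) (tmul x (hom (m - 2 - i) v)) \<in> Tk d m"
          unfolding e .
        thus ?thesis using False TkZ by blast
      qed
      thus ?thesis using False by (simp add: hom_def)
    next
      case True
      have ss: "\<And>j::nat. 2 \<le> j \<Longrightarrow> Suc (Suc (j - 2)) = j" by arith
      have l: "tmul (tmul u x) v w = (\<Sum>j\<le>m. if 2 \<le> j then u (take (j - 2) w) * x (take 2 (drop (j - 2) w)) * v (drop (j - 2 + 2) w) else 0)"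
        unfolding tmul_def[of "tmul u x" v] using True
        by (intro sum.cong refl) (auto simp: tmul_homR[OF xT] min_def drop_take ss)
      have r: "tmul (hom i u) (tmul x (hom (m - 2 - i) v)) w = u (take i w) * x (take 2 (drop i w)) * v (drop (i + 2) w)"
        if "i < m - 1" for i
        unfolding tmul_homL[OF hom_Tk[OF u]] tmul_homL[OF xT] using that True
        by (auto simp: hom_def add.commute)
      have "hom m (tmul (tmul u x) v) w = tmul (tmul u x) v w" using True by (simp add: hom_def)
      also have "\<dots> = (\<Sum>i<m - 1. u (take i w) * x (take 2 (drop i w)) * v (drop (i + 2) w))"
        unfolding l by (rule sum_shift2)
      also have "\<dots> = (\<Sum>i<m - 1. tmul (hom i u) (tmul x (hom (m - 2 - i) v)) w)"
        by (rule sum.cong[OF refl], rule r[symmetric]) simp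
      finally show ?thesis .
    qed
  qed
  show ?thesis unfolding eq J_def
  proof (rule span_sum)
    fix i assume "i \<in> {..<m - 1}"
    thus "tmul (hom i u) (tmul x (hom (m - 2 - i) v)) \<in> lin_span (G d Rm q m)"
      by (intro span_base G_I[OF hom_Tk[OF u] x hom_Tk[OF v]]) auto
  qed simp
qed

lemma Iid_J:
  assumes "f \<in> Iid d Rm q" "f \<in> Tk d m"
  shows "f \<in> J d Rm q m"
proof -
  have "hom m f \<in> lin_span (G d Rm q m)"
    using lin_op_span[OF lin_op_hom, of "{tmul (tmul u x) v | u x v. u \<in> Tall d \<and> x \<in> Kq d Rm q \<and> v \<in> Tall d}"]
      assms(1) hom_gen unfolding Iid_def J_def by blast
  thus ?thesis using hom_id[OF assms(2)] by (simp add: J_def)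
qed

lemma VJ_slice:
  assumes "g \<in> VJ d Rm q m"
  shows "slice c g \<in> J d Rm q (m - 1)"
  unfolding J_def
proof (rule lin_op_span[OF lin_op_slice])
  fix y assume "y \<in> {tmul (delta1 c) g | c g. c < d \<and> g \<in> J d Rm q (m - 1)}"
  then obtain e g where "y = tmul (delta1 e) g" "g \<in> J d Rm q (m - 1)" by blast
  thus "slice c y \<in> lin_span (G d Rm q (m - 1))"
    by (auto simp: slice_tmul_delta1 J_def lin_span.zero)
next
  show "g \<in> lin_span {tmul (delta1 c) g | c g. c < d \<and> g \<in> J d Rm q (m - 1)}"
    using assms unfolding VJ_def .
qed

lemma GVJ:
  assumes u: "u \<in> Tk d (Suc p)" and x: "x \<in> Kq d Rm q" and v: "v \<in> Tk d l" and m: "m = p + 3 + l"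
  shows "tmul u (tmul x v) \<in> VJ d Rm q m"
proof -
  have "tmul u (tmul x v) = tmul (\<lambda>w. \<Sum>c<d. tmul (delta1 c) (slice c u) w) (tmul x v)"
    using DEC[OF u] by simp
  also have "\<dots> = (\<lambda>w. \<Sum>c<d. tmul (tmul (delta1 c) (slice c u)) (tmul x v) w)"
    by (rule lin_op_sum[OF lin_op_tmulL]) simp
  also have "\<dots> = (\<lambda>w. \<Sum>c<d. tmul (delta1 c) (tmul (slice c u) (tmul x v)) w)"
  proof -
    have "tmul (tmul (delta1 c) (slice c u)) (tmul x v) = tmul (delta1 c) (tmul (slice c u) (tmul x v))" if "c < d" for c
      by (rule tmul_assoc[OF delta1_Tk[OF that] slice_Tk[OF u]])
    thus ?thesis by simp
  qed
  finally have eq: "tmul u (tmul x v) = (\<lambda>w. \<Sum>c<d. tmul (delta1 c) (tmul (slice c u) (tmul x v)) w)" .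
  show ?thesis unfolding eq VJ_def
  proof (rule span_sum)
    fix c assume c: "c \<in> {..<d}"
    have "tmul (slice c u) (tmul x v) \<in> J d Rm q (m - 1)"
      unfolding J_def by (rule span_base, rule G_I[OF slice_Tk[OF u] x v]) (simp add: m)
    thus "tmul (delta1 c) (tmul (slice c u) (tmul x v)) \<in> lin_span {tmul (delta1 c) g | c g. c < d \<and> g \<in> J d Rm q (m - 1)}"
      using c by (intro span_base) blast
  qed simp
qed



lemma span_lin_sum:
  assumes "lin_op F" "finite A" "\<And>a. a \<in> A \<Longrightarrow> F (f a) \<in> lin_span T"
  shows "F (\<lambda>w. \<Sum>a\<in>A. f a w) \<in> lin_span T"
  unfolding lin_op_sum[OF assms(1,2)] by (rule span_sum[OF assms(2,3)])

lemma P2: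
  assumes u: "u \<in> Tk d i" and x: "x \<in> Kq d Rm q" and v: "v \<in> Tk d l"
  shows "Tact d Rm (Suc i) (tmul u (tmul x v)) = (\<lambda>w. q * tmul u (tmul x v) w)"
proof -
  have xT: "x \<in> Tk d 2" by (rule Kq_Tk[OF x])
  have "Tact d Rm (Suc i) (tmul u (tmul x v)) = tmul u (Tact d Rm 1 (tmul x v))"
    using Tact_tmul_R[OF u, of "Suc i" Rm "tmul x v"] by simp
  also have "Tact d Rm 1 (tmul x v) = tmul (Tact d Rm 1 x) v"
    by (rule Tact_tmul_L[OF xT]) (use Tk_vd[OF v] in \<open>auto simp: vd_def\<close>)
  also have "\<dots> = tmul (\<lambda>w. q * x w) v" by (simp only: Kq_act[OF x])
  also have "\<dots> = (\<lambda>w. q * tmul x v w)" by (rule lin_op_smult[OF lin_op_tmulL])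
  also have "tmul u (\<lambda>w. q * tmul x v w) = (\<lambda>w. q * tmul u (tmul x v) w)" by (rule lin_op_smult[OF lin_op_tmulR])
  finally show ?thesis .
qed

lemma Tseg12: "Tseg d Rm 1 2 f = Tact d Rm 1 (Tact d Rm 2 f)"
  by (simp add: numeral_2_eq_2)

lemma P3b:
  assumes H: "is_hecke_symmetry d Rm q" and u: "u \<in> Tk d i" and x: "x \<in> Kq d Rm q" and v: "v \<in> Tk d (Suc l')"
  shows "tmul u (Tseg d Rm 1 2 (tmul x v)) \<in> lin_span {tmul u' (tmul x' s) | u' x' s. u' \<in> Tk d (Suc i) \<and> x' \<in> Kq d Rm q \<and> s \<in> Tk d l'}"
    (is "_ \<in> lin_span ?W")
proof -
  have xT: "x \<in> Tk d 2" by (rule Kq_Tk[OF x])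
  have e1: "tmul x v = (\<lambda>w. \<Sum>e<d. tmul (tmul x (delta1 e)) (slice e v) w)"
  proof -
    have "tmul x v = tmul x (\<lambda>w. \<Sum>e<d. tmul (delta1 e) (slice e v) w)" using DEC[OF v] by simp
    also have "\<dots> = (\<lambda>w. \<Sum>e<d. tmul x (tmul (delta1 e) (slice e v)) w)"
      by (rule lin_op_sum[OF lin_op_tmulR]) simp
    also have "\<dots> = (\<lambda>w. \<Sum>e<d. tmul (tmul x (delta1 e)) (slice e v) w)"
      using tmul_assoc[OF xT delta1_Tk] by simp
    finally show ?thesis .
  qed
  have e2: "Tseg d Rm 1 2 (tmul (tmul x (delta1 e)) (slice e v)) = tmul (Tseg d Rm 1 2 (tmul x (delta1 e))) (slice e v)"
    if "e < d" for e
    by (rule Tseg_tmul_L[OF tmul_Tk[OF xT delta1_Tk[OF that]]]) (auto simp: Tk_vd[OF slice_Tk[OF v]])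
  have "tmul u (Tseg d Rm 1 2 (tmul x v)) = tmul u (\<lambda>w. \<Sum>e<d. Tseg d Rm 1 2 (tmul (tmul x (delta1 e)) (slice e v)) w)"
    unfolding e1 by (subst lin_op_sum[OF lin_op_Tseg]) simp_all
  also have "\<dots> = (\<lambda>w. \<Sum>e<d. tmul u (Tseg d Rm 1 2 (tmul (tmul x (delta1 e)) (slice e v))) w)"
    by (rule lin_op_sum[OF lin_op_tmulR]) simp
  finally have eq: "tmul u (Tseg d Rm 1 2 (tmul x v)) = (\<lambda>w. \<Sum>e<d. tmul u (Tseg d Rm 1 2 (tmul (tmul x (delta1 e)) (slice e v))) w)" .
  show ?thesis unfolding eq
  proof (rule span_sum)
    fix e assume "e \<in> {..<d}"
    hence e: "e < d" by simp
    define h where "h = Tseg d Rm 1 2 (tmul x (delta1 e))"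
    have hT: "h \<in> Tk d 3" and hc: "\<And>c. c < d \<Longrightarrow> slice c h \<in> Kq d Rm q"
      using braid3[OF H x e] unfolding h_def Tseg12 by auto
    have sv: "slice e v \<in> Tk d l'" by (rule slice_Tk[OF v])
    have "tmul u (Tseg d Rm 1 2 (tmul (tmul x (delta1 e)) (slice e v))) = tmul u (tmul h (slice e v))"
      using e2[OF e] h_def by simp
    also have "\<dots> = tmul u (tmul (\<lambda>w. \<Sum>c<d. tmul (delta1 c) (slice c h) w) (slice e v))"
      using DEC[of h d 2] hT by (simp add: numeral_3_eq_3 numeral_2_eq_2)
    also have "\<dots> = tmul u (\<lambda>w. \<Sum>c<d. tmul (tmul (delta1 c) (slice c h)) (slice e v) w)"
      by (subst lin_op_sum[OF lin_op_tmulL]) simp_all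
    also have "\<dots> = (\<lambda>w. \<Sum>c<d. tmul u (tmul (tmul (delta1 c) (slice c h)) (slice e v)) w)"
      by (rule lin_op_sum[OF lin_op_tmulR]) simp
    also have "\<dots> = (\<lambda>w. \<Sum>c<d. tmul (tmul u (delta1 c)) (tmul (slice c h) (slice e v)) w)"
    proof -
      have "tmul u (tmul (tmul (delta1 c) (slice c h)) (slice e v)) = tmul (tmul u (delta1 c)) (tmul (slice c h) (slice e v))"
        if "c < d" for c
      proof -
        have s2: "slice c h \<in> Tk d 2" using slice_Tk[of h d 2] hT by (simp add: numeral_3_eq_3 numeral_2_eq_2)
        show ?thesis
          using tmul_assoc[OF delta1_Tk[OF that] s2] tmul_assoc[OF u delta1_Tk[OF that]] by simp
      qed
      thus ?thesis by simp
    qed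
    finally have eq2: "tmul u (Tseg d Rm 1 2 (tmul (tmul x (delta1 e)) (slice e v))) = (\<lambda>w. \<Sum>c<d. tmul (tmul u (delta1 c)) (tmul (slice c h) (slice e v)) w)" .
    show "tmul u (Tseg d Rm 1 2 (tmul (tmul x (delta1 e)) (slice e v))) \<in> lin_span ?W"
      unfolding eq2
    proof (rule span_sum)
      fix c assume "c \<in> {..<d}"
      hence c: "c < d" by simp
      have "tmul u (delta1 c) \<in> Tk d (Suc i)" using tmul_Tk[OF u delta1_Tk[OF c]] by simp
      thus "tmul (tmul u (delta1 c)) (tmul (slice c h) (slice e v)) \<in> lin_span ?W"
        using hc[OF c] sv by (intro span_base) blast
    qed simp
  qed simp
qed



lemma P3:
  assumes H: "is_hecke_symmetry d Rm q" and u: "u \<in> Tk d i" and x: "x \<in> Kq d Rm q" and v: "v \<in> Tk d l"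
    and j: "i + 2 \<le> j" "j < i + 2 + l"
  shows "Tseg d Rm 1 j (tmul u (tmul x v)) \<in> VJ d Rm q (i + 2 + l)"
proof -
  obtain r where r: "j = i + (2 + r)" using j(1) by (metis add.assoc le_iff_add)
  have rl: "r < l" using j(2) r by simp
  then obtain l' where l': "l = Suc l'" by (cases l) auto
  have xT: "x \<in> Tk d 2" by (rule Kq_Tk[OF x])
  define v3 where "v3 = Tseg d Rm 1 r v"
  have v3: "v3 \<in> Tk d (Suc l')" unfolding v3_def using Tseg_Tk[OF v] l' by simp
  have "Tseg d Rm 1 j (tmul u (tmul x v)) = Tseg d Rm 1 i (Tseg d Rm (1 + i) (2 + r) (tmul u (tmul x v)))"
    unfolding r by (rule Tseg_add)
  also have "Tseg d Rm (1 + i) (2 + r) (tmul u (tmul x v)) = Tseg d Rm (1 + i) 2 (Tseg d Rm (1 + i + 2) r (tmul u (tmul x v)))"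
    by (rule Tseg_add)
  also have "Tseg d Rm (1 + i + 2) r (tmul u (tmul x v)) = tmul u (Tseg d Rm 3 r (tmul x v))"
  proof -
    have "1 + i + 2 = 3 + i" by simp
    thus ?thesis using Tseg_tmul_R[OF u, of 3 Rm r "tmul x v"] by (simp only:)
  qed
  also have "Tseg d Rm 3 r (tmul x v) = tmul x v3"
    using Tseg_tmul_R[OF xT, of 1 Rm r v] by (simp add: v3_def numeral_3_eq_3)
  also have "Tseg d Rm (1 + i) 2 (tmul u (tmul x v3)) = tmul u (Tseg d Rm 1 2 (tmul x v3))"
    using Tseg_tmul_R[OF u, of 1 Rm 2 "tmul x v3"] by simp
  finally have eq: "Tseg d Rm 1 j (tmul u (tmul x v)) = Tseg d Rm 1 i (tmul u (Tseg d Rm 1 2 (tmul x v3)))" .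
  have W: "tmul u (Tseg d Rm 1 2 (tmul x v3)) \<in> lin_span {tmul u' (tmul x' s) | u' x' s. u' \<in> Tk d (Suc i) \<and> x' \<in> Kq d Rm q \<and> s \<in> Tk d l'}"
    by (rule P3b[OF H u x v3])
  show ?thesis unfolding eq VJ_def
  proof (rule lin_op_span[OF lin_op_Tseg _ W])
    fix y assume "y \<in> {tmul u' (tmul x' s) | u' x' s. u' \<in> Tk d (Suc i) \<and> x' \<in> Kq d Rm q \<and> s \<in> Tk d l'}"
    then obtain u' x' s where y: "y = tmul u' (tmul x' s)" "u' \<in> Tk d (Suc i)" "x' \<in> Kq d Rm q" "s \<in> Tk d l'" by blast
    have xs: "tmul x' s \<in> Tk d (2 + l')" by (rule tmul_Tk[OF Kq_Tk[OF y(3)] y(4)])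
    have "Tseg d Rm 1 i y = tmul (Tseg d Rm 1 i u') (tmul x' s)"
      unfolding y(1) by (rule Tseg_tmul_L[OF y(2)]) (auto simp: Tk_vd[OF xs])
    also have "\<dots> \<in> VJ d Rm q (i + 2 + l)"
      by (rule GVJ[OF Tseg_Tk[OF y(2)] y(3) y(4)]) (simp add: l')
    finally show "Tseg d Rm 1 i y \<in> lin_span {tmul (delta1 c) g | c g. c < d \<and> g \<in> J d Rm q (i + 2 + l - 1)}"
      unfolding VJ_def .
  qed
qed



lemma lin_op_Tprod: "lin_op (Tprod d Rm j)"
  unfolding Tprod_Tseg[abs_def] by (rule lin_op_Tseg)

lemma lin_op_yact: "lin_op (yact d Rm q k)"
  unfolding lin_op_def yact_def
proof (intro allI ext)
  fix c f g w
  show "(\<Sum>j<k. (- 1) ^ j * q ^ (k - 1 - j) * Tprod d Rm j (\<lambda>w. c * f w + g w) w) =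
        c * (\<Sum>j<k. (- 1) ^ j * q ^ (k - 1 - j) * Tprod d Rm j f w) + (\<Sum>j<k. (- 1) ^ j * q ^ (k - 1 - j) * Tprod d Rm j g w)"
    by (simp only: lin_opD[OF lin_op_Tprod]) (simp add: sum.distrib sum_distrib_left algebra_simps)
qed

lemma KOSZUL:
  assumes H: "is_hecke_symmetry d Rm q" and f: "f \<in> J d Rm q m"
  shows "yact d Rm q m f \<in> VJ d Rm q m"
  using f[unfolded J_def] unfolding VJ_def[of d Rm q m]
proof (rule lin_op_span[OF lin_op_yact, rotated])
  fix y assume "y \<in> G d Rm q m"
  then obtain u x v i where y: "y = tmul u (tmul x v)" "u \<in> Tk d i" "x \<in> Kq d Rm q" "v \<in> Tk d (m - 2 - i)" "i + 2 \<le> m"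
    unfolding G_def by blast
  define l where "l = m - 2 - i"
  have m: "m = i + 2 + l" using y(5) by (simp add: l_def)
  have v: "v \<in> Tk d l" using y(4) by (simp add: l_def)
  have xT: "x \<in> Tk d 2" by (rule Kq_Tk[OF y(3)])
  have xv: "tmul x v \<in> Tk d (2 + l)" by (rule tmul_Tk[OF xT v])
  define t where "t j = (\<lambda>w. (-1) ^ j * q ^ (m - 1 - j) * Tprod d Rm j y w)" for j
  have yy: "yact d Rm q m y = (\<lambda>w. \<Sum>j<m. t j w)" by (simp add: yact_def t_def)
  have tV: "t j \<in> VJ d Rm q m" if "j \<in> {..<m} - {i} - {Suc i}" for j
  proof -
    have "Tprod d Rm j y \<in> VJ d Rm q m"
    proof (cases "j < i")
      case True
      then obtain p where p: "i = Suc p" by (cases i) auto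
      have "Tprod d Rm j y = tmul (Tseg d Rm 1 j u) (tmul x v)"
        unfolding Tprod_Tseg y(1) by (rule Tseg_tmul_L[OF y(2)]) (use True Tk_vd[OF xv] in auto)
      also have "\<dots> \<in> VJ d Rm q m"
        by (rule GVJ[OF Tseg_Tk[OF y(2)[unfolded p]] y(3) v]) (simp add: m p)
      finally show ?thesis .
    next
      case False
      hence "i + 2 \<le> j" "j < i + 2 + l" using that m by auto
      thus ?thesis unfolding Tprod_Tseg y(1) m by (rule P3[OF H y(2) y(3) v])
    qed
    thus ?thesis unfolding t_def VJ_def by (rule span_smult)
  qed
  have pair: "t i w + t (Suc i) w = 0" for w
  proof -
    have "Tprod d Rm (Suc i) y = Tprod d Rm i (\<lambda>w. q * y w)"
      using P2[OF y(2) y(3) v] y(1) by simp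
    also have "\<dots> = (\<lambda>w. q * Tprod d Rm i y w)" by (rule lin_op_smult[OF lin_op_Tprod])
    finally have e: "Tprod d Rm (Suc i) y w = q * Tprod d Rm i y w" by simp
    have qq: "q ^ (m - 1 - i) = q ^ (m - 1 - Suc i) * q" using m
      by (simp add: power_Suc2[symmetric] Suc_diff_Suc)
    show ?thesis unfolding t_def e qq by (simp add: algebra_simps)
  qed
  have "(\<lambda>w. \<Sum>j<m. t j w) = (\<lambda>w. (t i w + t (Suc i) w) + (\<Sum>j\<in>{..<m} - {i} - {Suc i}. t j w))"
  proof
    fix w
    have i1: "i \<in> {..<m}" and i2: "Suc i \<in> {..<m} - {i}" using m by auto
    have "(\<Sum>j<m. t j w) = t i w + (\<Sum>j\<in>{..<m} - {i}. t j w)"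
      by (rule sum.remove[OF _ i1]) simp
    also have "(\<Sum>j\<in>{..<m} - {i}. t j w) = t (Suc i) w + (\<Sum>j\<in>{..<m} - {i} - {Suc i}. t j w)"
      by (rule sum.remove[OF _ i2]) simp
    finally show "(\<Sum>j<m. t j w) = (t i w + t (Suc i) w) + (\<Sum>j\<in>{..<m} - {i} - {Suc i}. t j w)"
      by (simp add: add.assoc)
  qed
  also have "\<dots> = (\<lambda>w. \<Sum>j\<in>{..<m} - {i} - {Suc i}. t j w)" using pair by simp
  finally have "yact d Rm q m y = (\<lambda>w. \<Sum>j\<in>{..<m} - {i} - {Suc i}. t j w)" using yy by simp
  moreover have "(\<lambda>w. \<Sum>j\<in>{..<m} - {i} - {Suc i}. t j w) \<in> VJ d Rm q m"
    unfolding VJ_def by (rule span_sum) (use tV in \<open>auto simp: VJ_def\<close>)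
  ultimately show "yact d Rm q m y \<in> lin_span {tmul (delta1 c) g | c g. c < d \<and> g \<in> J d Rm q (m - 1)}"
    by (simp add: VJ_def)
qed

lemma SHIFT:
  assumes H: "is_hecke_symmetry d Rm q" and g: "g \<in> J d Rm q n" and c: "c < d"
  shows "Tseg d Rm 1 n (tmul g (delta1 c)) \<in> VJ d Rm q (Suc n)"
proof -
  have lo: "lin_op (\<lambda>g. Tseg d Rm 1 n (tmul g (delta1 c)))"
    using lin_op_comp[OF lin_op_Tseg[of d Rm 1 n] lin_op_tmulL[of "delta1 c"]] by simp
  have "(\<lambda>g. Tseg d Rm 1 n (tmul g (delta1 c))) g \<in> lin_span {tmul (delta1 c) g | c g. c < d \<and> g \<in> J d Rm q (Suc n - 1)}"
  proof (rule lin_op_span[OF lo])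
    show "g \<in> lin_span (G d Rm q n)" using g unfolding J_def .
  next
  fix y assume "y \<in> G d Rm q n"
  then obtain u x v i where y: "y = tmul u (tmul x v)" "u \<in> Tk d i" "x \<in> Kq d Rm q" "v \<in> Tk d (n - 2 - i)" "i + 2 \<le> n"
    unfolding G_def by blast
  define l where "l = n - 2 - i"
  have n: "n = i + 2 + l" using y(5) by (simp add: l_def)
  have v: "v \<in> Tk d l" using y(4) by (simp add: l_def)
  have xT: "x \<in> Tk d 2" by (rule Kq_Tk[OF y(3)])
  have xv: "tmul x v \<in> Tk d (2 + l)" by (rule tmul_Tk[OF xT v])
  have "tmul y (delta1 c) = tmul u (tmul x (tmul v (delta1 c)))"
    unfolding y(1) tmul_assoc[OF y(2) xv] tmul_assoc[OF xT v] ..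
  moreover have vc: "tmul v (delta1 c) \<in> Tk d (l + 1)" by (rule tmul_Tk[OF v delta1_Tk[OF c]])
  ultimately have "Tseg d Rm 1 n (tmul y (delta1 c)) \<in> VJ d Rm q (i + 2 + (l + 1))"
    using P3[OF H y(2) y(3) vc, of n] n by simp
  thus "(\<lambda>g. Tseg d Rm 1 n (tmul g (delta1 c))) y \<in> lin_span {tmul (delta1 c) g | c g. c < d \<and> g \<in> J d Rm q (Suc n - 1)}"
    using n by (simp add: VJ_def)
  qed
  thus ?thesis by (simp add: VJ_def)
qed



lemma DECOMP:
  assumes a: "a \<in> Tk d k" and z: "z \<in> Tk d (Suc p)"
  shows "tmul a z = (\<lambda>w. \<Sum>e<d. tmul (tmul a (rslice e z)) (delta1 e) w)"
proof -
  have "tmul a z = tmul a (\<lambda>w. \<Sum>e<d. tmul (rslice e z) (delta1 e) w)" using DECR[OF z] by simp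
  also have "\<dots> = (\<lambda>w. \<Sum>e<d. tmul a (tmul (rslice e z) (delta1 e)) w)"
    by (rule lin_op_sum[OF lin_op_tmulR]) simp
  also have "\<dots> = (\<lambda>w. \<Sum>e<d. tmul (tmul a (rslice e z)) (delta1 e) w)"
    using tmul_assoc[OF a rslice_Tk[OF z]] by simp
  finally show ?thesis .
qed

lemma J_rmul:
  assumes g: "g \<in> J d Rm q n" and e: "e < d"
  shows "tmul g (delta1 e) \<in> J d Rm q (Suc n)"
  using g[unfolded J_def] unfolding J_def
proof (rule lin_op_span[OF lin_op_tmulL, rotated])
  fix y assume "y \<in> G d Rm q n"
  then obtain u x v i where y: "y = tmul u (tmul x v)" "u \<in> Tk d i" "x \<in> Kq d Rm q" "v \<in> Tk d (n - 2 - i)" "i + 2 \<le> n"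
    unfolding G_def by blast
  have xT: "x \<in> Tk d 2" by (rule Kq_Tk[OF y(3)])
  have xv: "tmul x v \<in> Tk d (2 + (n - 2 - i))" by (rule tmul_Tk[OF xT y(4)])
  have "tmul y (delta1 e) = tmul u (tmul x (tmul v (delta1 e)))"
    unfolding y(1) tmul_assoc[OF y(2) xv] tmul_assoc[OF xT y(4)] ..
  moreover have "tmul v (delta1 e) \<in> Tk d (n - 2 - i + 1)" by (rule tmul_Tk[OF y(4) delta1_Tk[OF e]])
  ultimately show "tmul y (delta1 e) \<in> lin_span (G d Rm q (Suc n))"
    using y(5) by (intro span_base) (simp add: G_I[OF y(2) y(3)])
qed

lemma yact_Tk: "f \<in> Tk d k \<Longrightarrow> yact d Rm q k f \<in> Tk d k"
  unfolding yact_def by (intro Tk_sum) (auto simp: Tprod_Tseg intro!: Tk_smult Tseg_Tk)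

lemma MC:
  assumes H: "is_hecke_symmetry d Rm q" and kn: "0 < k" "k < n"
    and a: "a \<in> Tk d k" and aJ: "\<And>b. b \<in> Tk d (n - k) \<Longrightarrow> tmul a b \<in> J d Rm q n"
    and b: "b \<in> Tk d (Suc n - k)"
  shows "tmul (yact d Rm q k a) b \<in> VJ d Rm q (Suc n)"
proof -
  have q: "q \<noteq> 0" by (rule hecke_q[OF H])
  have snk: "Suc n - k = Suc (n - k)" using kn by simp
  have Jn: "tmul a z \<in> J d Rm q (Suc n)" if z: "z \<in> Tk d (Suc n - k)" for z
  proof -
    have z': "z \<in> Tk d (Suc (n - k))" using z snk by simp
    show ?thesis unfolding DECOMP[OF a z'] J_def
      by (rule span_sum) (auto intro!: J_rmul[unfolded J_def] aJ[unfolded J_def] rslice_Tk[OF z'])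
  qed
  have Q: "Tseg d Rm 1 k (tmul a z) \<in> VJ d Rm q (Suc n)" if z: "z \<in> Tk d (Suc n - k)" for z
  proof -
    have lt: "n - k < Suc n - k" using kn by simp
    obtain z2 where z2: "z2 \<in> Tk d (Suc n - k)" "Tseg d Rm 1 (n - k) z2 = z"
      using Tseg_surj[OF H z lt] by blast
    have z2': "z2 \<in> Tk d (Suc (n - k))" using z2 snk by simp
    have "Tseg d Rm 1 k (tmul a z) = Tseg d Rm 1 k (Tseg d Rm (1 + k) (n - k) (tmul a z2))"
      using Tseg_tmul_R[OF a, of 1 Rm "n - k" z2] z2(2) by (simp add: add.commute)
    also have "\<dots> = Tseg d Rm 1 n (tmul a z2)"
      using Tseg_add[of d Rm 1 k "n - k" "tmul a z2"] kn by simp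
    also have "\<dots> = Tseg d Rm 1 n (\<lambda>w. \<Sum>e<d. tmul (tmul a (rslice e z2)) (delta1 e) w)"
      using DECOMP[OF a z2'] by simp
    also have "\<dots> = (\<lambda>w. \<Sum>e<d. Tseg d Rm 1 n (tmul (tmul a (rslice e z2)) (delta1 e)) w)"
      by (rule lin_op_sum[OF lin_op_Tseg]) simp
    finally have eq: "Tseg d Rm 1 k (tmul a z) = (\<lambda>w. \<Sum>e<d. Tseg d Rm 1 n (tmul (tmul a (rslice e z2)) (delta1 e)) w)" .
    show ?thesis unfolding eq VJ_def
    proof (rule span_sum)
      fix e assume "e \<in> {..<d}"
      hence "Tseg d Rm 1 n (tmul (tmul a (rslice e z2)) (delta1 e)) \<in> VJ d Rm q (Suc n)"
        by (intro SHIFT[OF H aJ[OF rslice_Tk[OF z2']]]) simp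
      thus "Tseg d Rm 1 n (tmul (tmul a (rslice e z2)) (delta1 e)) \<in> lin_span {tmul (delta1 c) g | c g. c < d \<and> g \<in> J d Rm q (Suc n - 1)}"
        by (simp add: VJ_def)
    qed simp
  qed
  define f where "f = tmul a b"
  define c where "c j = (- 1) ^ j * q ^ (Suc n - 1 - j)" for j
  have fJ: "f \<in> J d Rm q (Suc n)" unfolding f_def by (rule Jn[OF b])
  have Y: "yact d Rm q (Suc n) f \<in> VJ d Rm q (Suc n)" by (rule KOSZUL[OF H fJ])
  have low: "Tprod d Rm j f = tmul (Tprod d Rm j a) b" if "j < k" for j
    unfolding f_def Tprod_Tseg by (rule Tseg_tmul_L[OF a]) (use that Tk_vd[OF b] in auto)
  have high: "Tprod d Rm j f \<in> VJ d Rm q (Suc n)" if "k \<le> j" "j < Suc n" for j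
  proof -
    have "Tprod d Rm j f = Tseg d Rm 1 k (Tseg d Rm (1 + k) (j - k) (tmul a b))"
      unfolding f_def Tprod_Tseg using Tseg_add[of d Rm 1 k "j - k" "tmul a b"] that by simp
    also have "Tseg d Rm (1 + k) (j - k) (tmul a b) = tmul a (Tseg d Rm 1 (j - k) b)"
      using Tseg_tmul_R[OF a, of 1 Rm "j - k" b] by (simp add: add.commute)
    finally show ?thesis using Q[OF Tseg_Tk[OF b]] by simp
  qed
  define p where "p = Suc n - k"
  have lowsum: "(\<Sum>j<k. c j * Tprod d Rm j f w) = q ^ p * tmul (yact d Rm q k a) b w" for w
  proof -
    have "tmul (yact d Rm q k a) b = tmul (\<lambda>w. \<Sum>j<k. (- 1) ^ j * q ^ (k - 1 - j) * Tprod d Rm j a w) b"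
      by (simp add: yact_def)
    also have "\<dots> = (\<lambda>w. \<Sum>j<k. tmul (\<lambda>w. (- 1) ^ j * q ^ (k - 1 - j) * Tprod d Rm j a w) b w)"
      by (rule lin_op_sum[OF lin_op_tmulL]) simp
    also have "\<dots> = (\<lambda>w. \<Sum>j<k. (- 1) ^ j * q ^ (k - 1 - j) * tmul (Tprod d Rm j a) b w)"
    proof (rule ext, rule sum.cong[OF refl])
      fix w j
      have "tmul (\<lambda>w. (- 1) ^ j * q ^ (k - 1 - j) * Tprod d Rm j a w) b = (\<lambda>w. (- 1) ^ j * q ^ (k - 1 - j) * tmul (Tprod d Rm j a) b w)"
        by (rule lin_op_smult[OF lin_op_tmulL])
      thus "tmul (\<lambda>w. (- 1) ^ j * q ^ (k - 1 - j) * Tprod d Rm j a w) b w = (- 1) ^ j * q ^ (k - 1 - j) * tmul (Tprod d Rm j a) b w"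
        by simp
    qed
    finally have e1: "tmul (yact d Rm q k a) b w = (\<Sum>j<k. (- 1) ^ j * q ^ (k - 1 - j) * tmul (Tprod d Rm j a) b w)"
      by simp
    have e2: "c j * Tprod d Rm j f w = q ^ p * ((- 1) ^ j * q ^ (k - 1 - j) * tmul (Tprod d Rm j a) b w)"
      if "j < k" for j
    proof -
      have "Suc n - 1 - j = p + (k - 1 - j)" using that kn by (simp add: p_def)
      thus ?thesis using low[OF that] by (simp add: c_def power_add algebra_simps)
    qed
    show ?thesis unfolding e1 sum_distrib_left by (rule sum.cong[OF refl]) (simp add: e2)
  qed
  have split: "yact d Rm q (Suc n) f w = q ^ p * tmul (yact d Rm q k a) b w + (\<Sum>j\<in>{k..<Suc n}. c j * Tprod d Rm j f w)" for w
  proof -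
    have "yact d Rm q (Suc n) f w = (\<Sum>j\<in>{0..<Suc n}. c j * Tprod d Rm j f w)"
      by (simp add: yact_def c_def atLeast0LessThan)
    also have "\<dots> = (\<Sum>j\<in>{0..<k}. c j * Tprod d Rm j f w) + (\<Sum>j\<in>{k..<Suc n}. c j * Tprod d Rm j f w)"
      by (rule sum.atLeastLessThan_concat[symmetric]) (use kn in auto)
    finally show ?thesis using lowsum by (simp add: atLeast0LessThan)
  qed
  have hs: "(\<lambda>w. \<Sum>j\<in>{k..<Suc n}. c j * Tprod d Rm j f w) \<in> VJ d Rm q (Suc n)"
    unfolding VJ_def by (rule span_sum) (auto intro!: span_smult high[unfolded VJ_def diff_Suc_1])
  have "(\<lambda>w. yact d Rm q (Suc n) f w - (\<Sum>j\<in>{k..<Suc n}. c j * Tprod d Rm j f w)) \<in> VJ d Rm q (Suc n)"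
    using span_diff[OF Y[unfolded VJ_def] hs[unfolded VJ_def]] by (simp add: VJ_def)
  hence "(\<lambda>w. q ^ p * tmul (yact d Rm q k a) b w) \<in> VJ d Rm q (Suc n)"
    using split by simp
  hence "(\<lambda>w. (1 / q ^ p) * (q ^ p * tmul (yact d Rm q k a) b w)) \<in> VJ d Rm q (Suc n)"
    unfolding VJ_def by (rule span_smult)
  thus ?thesis using q by simp
qed

theorem lemma4p1:
  fixes d n k :: nat and Rm :: "nat \<Rightarrow> nat \<Rightarrow> nat \<Rightarrow> nat \<Rightarrow> 'a::field" and q :: 'a
  assumes "is_hecke_symmetry d Rm q"
    and "1 < n" and "0 < k" and "k < n"
  shows "yact d Rm q k ` Lk d Rm q n k
           \<subseteq> lin_span {tmul v a | v a. v \<in> Tk d 1 \<and> a \<in> Lk d Rm q n (k - 1)}"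
proof
  fix y assume "y \<in> yact d Rm q k ` Lk d Rm q n k"
  then obtain a where y: "y = yact d Rm q k a" and aL: "a \<in> Lk d Rm q n k" by blast
  have a: "a \<in> Tk d k" using aL by (simp add: Lk_def)
  have aJ: "tmul a b \<in> J d Rm q n" if "b \<in> Tk d (n - k)" for b
  proof -
    have "tmul a b \<in> Iid d Rm q \<inter> Tk d n" using aL that by (simp add: Lk_def)
    thus ?thesis by (intro Iid_J) auto
  qed
  obtain k' where k': "k = Suc k'" using assms(3) by (cases k) auto
  have yT: "y \<in> Tk d (Suc k')" unfolding y using yact_Tk[OF a] k' by simp
  have sl: "slice c y \<in> Lk d Rm q n (k - 1)" if c: "c < d" for c
  proof -
    have sT: "slice c y \<in> Tk d k'" by (rule slice_Tk[OF yT])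
    have "tmul (slice c y) b \<in> Iid d Rm q \<inter> Tk d n" if b: "b \<in> Tk d (n - (k - 1))" for b
    proof -
      have b': "b \<in> Tk d (Suc n - k)" using b k' assms(4) by (simp add: Suc_diff_le)
      have "tmul y b \<in> VJ d Rm q (Suc n)" unfolding y by (rule MC[OF assms(1) assms(3,4) a aJ b'])
      hence "slice c (tmul y b) \<in> J d Rm q n" using VJ_slice by fastforce
      hence "tmul (slice c y) b \<in> J d Rm q n" using slice_tmul[OF yT] by simp
      thus ?thesis using J_Iid J_Tk by blast
    qed
    thus ?thesis using sT k' by (simp add: Lk_def)
  qed
  have "y = (\<lambda>w. \<Sum>c<d. tmul (delta1 c) (slice c y) w)" by (rule DEC[OF yT])
  also have "\<dots> \<in> lin_span {tmul v a | v a. v \<in> Tk d 1 \<and> a \<in> Lk d Rm q n (k - 1)}"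
  proof (rule span_sum)
    fix c assume "c \<in> {..<d}"
    hence c: "c < d" by simp
    have "tmul (delta1 c) (slice c y) \<in> {tmul v a | v a. v \<in> Tk d 1 \<and> a \<in> Lk d Rm q n (k - 1)}"
      using delta1_Tk[OF c] sl[OF c] by blast
    thus "tmul (delta1 c) (slice c y) \<in> lin_span {tmul v a | v a. v \<in> Tk d 1 \<and> a \<in> Lk d Rm q n (k - 1)}"
      by (rule span_base)
  qed simp
  finally show "y \<in> lin_span {tmul v a | v a. v \<in> Tk d 1 \<and> a \<in> Lk d Rm q n (k - 1)}" .
qed


end
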